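(* Let $T_0,T_1,A,B,C\subseteq\mathbb{N}$ with $T_0,T_1$ of total enumeration degree, $T_0<_e A$ and $T_1<_e A$. If $\{A,B\}$ is a nontrivial $\mathcal{K}_{T_0}$-pair and $\{A,C\}$ is a nontrivial $\mathcal{K}_{T_1}$-pair, then $T_0\equiv_e T_1$. In particular, $\{A,B\oplus C\}$ is a nontrivial $\mathcal{K}_{T_0}$-pair.
   Context: Enumeration reducibility: $A\le_e B$ if $A=\Gamma(B):=\{n:\exists D\subseteq B,\ \langle n,D\rangle\in\Gamma\}$ for some c.e. set $\Gamma$ of pairs $\langle n,D\rangle$ with $D$ finite; $A\equiv_e B$ iff $A\le_e B\le_e A$; $A<_e B$ iff $A\le_e B$ and $B\not\le_e A$. A set $T$ has total degree if $T\equiv_e X\oplus(\mathbb{N}\setminus X)$ for some $X$, where $X\oplus Y=\{2n:n\in X\}\cup\{2n+1:n\in Y\}$. $\mathcal{K}_U$-pair: $\{A,B\}$ is a $\mathcal{K}_U$-pair if there is $W\le_e U$ with $\{\langle a,b\rangle: a\in A, b\in B\}\subseteq W$ and $\{\langle a,b\rangle: a\notin A, b\notin B\}\cap W=\varnothing$; it is nontrivial if $A\not\le_e U$ and $B\not\le_e U$. *)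

theory Defs
  imports Main "HOL-Library.Nat_Bijection"
begin

inductive primrec_fn :: "nat \<Rightarrow> (nat list \<Rightarrow> nat) \<Rightarrow> bool" where
  pr_zero: "primrec_fn k (\<lambda>_. 0)"
| pr_succ: "primrec_fn 1 (\<lambda>xs. Suc (hd xs))"
| pr_proj: "i < k \<Longrightarrow> primrec_fn k (\<lambda>xs. xs ! i)"
| pr_comp: "primrec_fn m f \<Longrightarrow> length gs = m \<Longrightarrow> (\<forall>g\<in>set gs. primrec_fn k g)
             \<Longrightarrow> primrec_fn k (\<lambda>xs. f (map (\<lambda>g. g xs) gs))"
| pr_rec: "primrec_fn k f \<Longrightarrow> primrec_fn (Suc (Suc k)) g
             \<Longrightarrow> primrec_fn (Suc k)
                  (\<lambda>xs. rec_nat (f (tl xs)) (\<lambda>y r. g (y # r # tl xs)) (hd xs))"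

definition ce :: "nat set \<Rightarrow> bool" where
  "ce S \<longleftrightarrow> (\<exists>f. primrec_fn 2 f \<and> S = {n. \<exists>m. f [n, m] = 0})"

definition pair :: "nat \<Rightarrow> nat \<Rightarrow> nat" where
  "pair a b = prod_encode (a, b)"

definition fin_code :: "nat set \<Rightarrow> nat" where
  "fin_code D = (\<Sum>x\<in>D. 2 ^ x)"

definition enum_op :: "nat set \<Rightarrow> nat set \<Rightarrow> nat set" where
  "enum_op \<Gamma> B = {n. \<exists>D. finite D \<and> D \<subseteq> B \<and> pair n (fin_code D) \<in> \<Gamma>}"

definition e_le :: "nat set \<Rightarrow> nat set \<Rightarrow> bool" (infix "\<le>\<^sub>e" 50) where
  "A \<le>\<^sub>e B \<longleftrightarrow> (\<exists>\<Gamma>. ce \<Gamma> \<and> A = enum_op \<Gamma> B)"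

definition e_equiv :: "nat set \<Rightarrow> nat set \<Rightarrow> bool" (infix "\<equiv>\<^sub>e" 50) where
  "A \<equiv>\<^sub>e B \<longleftrightarrow> A \<le>\<^sub>e B \<and> B \<le>\<^sub>e A"

definition e_less :: "nat set \<Rightarrow> nat set \<Rightarrow> bool" (infix "<\<^sub>e" 50) where
  "A <\<^sub>e B \<longleftrightarrow> A \<le>\<^sub>e B \<and> \<not> B \<le>\<^sub>e A"

definition join :: "nat set \<Rightarrow> nat set \<Rightarrow> nat set" (infixl "\<oplus>" 65) where
  "X \<oplus> Y = {2 * n | n. n \<in> X} \<union> {2 * n + 1 | n. n \<in> Y}"

definition total_degree :: "nat set \<Rightarrow> bool" where
  "total_degree T \<longleftrightarrow> (\<exists>X. T \<equiv>\<^sub>e X \<oplus> (UNIV - X))"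

definition K_pair :: "nat set \<Rightarrow> nat set \<Rightarrow> nat set \<Rightarrow> bool" where
  "K_pair U A B \<longleftrightarrow> (\<exists>W. W \<le>\<^sub>e U
      \<and> {pair a b | a b. a \<in> A \<and> b \<in> B} \<subseteq> W
      \<and> {pair a b | a b. a \<notin> A \<and> b \<notin> B} \<inter> W = {})"

definition nontrivial_K_pair :: "nat set \<Rightarrow> nat set \<Rightarrow> nat set \<Rightarrow> bool" where
  "nontrivial_K_pair U A B \<longleftrightarrow> K_pair U A B \<and> \<not> A \<le>\<^sub>e U \<and> \<not> B \<le>\<^sub>e U"

end

theory Submission
  imports Defs
begin

definition PR :: "nat \<Rightarrow> (nat list \<Rightarrow> nat) \<Rightarrow> bool" where
  "PR k f \<longleftrightarrow> (\<exists>g. primrec_fn k g \<and> (\<forall>xs. length xs = k \<longrightarrow> f xs = g xs))"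

lemma PR_cong: "PR k f \<Longrightarrow> (\<And>xs. length xs = k \<Longrightarrow> f xs = g xs) \<Longrightarrow> PR k g"
  unfolding PR_def by metis

lemma primrec_PR: "primrec_fn k f \<Longrightarrow> PR k f"
  unfolding PR_def by blast

lemma PR_zero: "PR k (\<lambda>_. 0)"
  by (rule primrec_PR) (rule pr_zero)

lemma PR_proj: "i < k \<Longrightarrow> PR k (\<lambda>xs. xs ! i)"
  by (rule primrec_PR) (rule pr_proj)

lemma PR_comp:
  assumes h: "PR m h" and len: "length gs = m" and gs: "\<forall>g\<in>set gs. PR k g"
  shows "PR k (\<lambda>xs. h (map (\<lambda>g. g xs) gs))"
proof -
  obtain h' where h': "primrec_fn m h'" "\<forall>xs. length xs = m \<longrightarrow> h xs = h' xs"
    using h unfolding PR_def by blast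
  obtain ch where ch: "\<forall>g\<in>set gs. primrec_fn k (ch g) \<and> (\<forall>xs. length xs = k \<longrightarrow> g xs = ch g xs)"
    using bchoice[OF gs[unfolded PR_def]] by blast
  have ch1: "\<forall>g\<in>set gs. primrec_fn k (ch g)" using ch by blast
  have ch2: "ch g xs = g xs" if "g \<in> set gs" "length xs = k" for g xs
    using ch that by metis
  have "primrec_fn k (\<lambda>xs. h' (map (\<lambda>g. g xs) (map ch gs)))"
    by (rule pr_comp) (use h'(1) len ch1 in auto)
  moreover have "h (map (\<lambda>g. g xs) gs) = h' (map (\<lambda>g. g xs) (map ch gs))" if "length xs = k" for xs
  proof -
    have e: "map (\<lambda>g. g xs) (map ch gs) = map (\<lambda>g. g xs) gs"
      unfolding map_map comp_def by (rule map_cong[OF refl]) (simp add: ch2 that)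
    have "h (map (\<lambda>g. g xs) gs) = h' (map (\<lambda>g. g xs) gs)" using h'(2) len by simp
    then show ?thesis unfolding e .
  qed
  ultimately show ?thesis unfolding PR_def by blast
qed

lemma PR_compL:
  assumes "PR m h" "\<And>i. i < m \<Longrightarrow> PR k (ts i)"
  shows "PR k (\<lambda>xs. h (map (\<lambda>i. ts i xs) [0..<m]))"
proof -
  have "PR k (\<lambda>xs. h (map (\<lambda>g. g xs) (map ts [0..<m])))"
    by (rule PR_comp) (use assms in auto)
  then show ?thesis by (simp add: comp_def)
qed

lemma PR_rec:
  assumes f: "PR k f" and g: "PR (Suc (Suc k)) g"
    and F0: "\<And>ys. length ys = k \<Longrightarrow> F (0 # ys) = f ys"
    and FS: "\<And>n ys. length ys = k \<Longrightarrow> F (Suc n # ys) = g (n # F (n # ys) # ys)"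
  shows "PR (Suc k) F"
proof -
  obtain f' where f': "primrec_fn k f'" "\<forall>xs. length xs = k \<longrightarrow> f xs = f' xs"
    using f unfolding PR_def by blast
  obtain g' where g': "primrec_fn (Suc (Suc k)) g'" "\<forall>xs. length xs = Suc (Suc k) \<longrightarrow> g xs = g' xs"
    using g unfolding PR_def by blast
  have P: "primrec_fn (Suc k) (\<lambda>xs. rec_nat (f' (tl xs)) (\<lambda>y r. g' (y # r # tl xs)) (hd xs))"
    by (rule pr_rec) (use f' g' in auto)
  have E: "F (n # ys) = rec_nat (f' ys) (\<lambda>y r. g' (y # r # ys)) n" if "length ys = k" for n ys
    by (induction n) (use that F0 FS f' g' in auto)
  show ?thesis unfolding PR_def
    by (rule exI[of _ "\<lambda>xs. rec_nat (f' (tl xs)) (\<lambda>y r. g' (y # r # tl xs)) (hd xs)"])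
       (auto simp: P length_Suc_conv E)
qed

lemma PR_comp1: "PR (Suc 0) h \<Longrightarrow> PR k f \<Longrightarrow> PR k (\<lambda>xs. h [f xs])"
  using PR_comp[of "Suc 0" h "[f]" k] by simp

lemma PR_comp2: "PR (Suc (Suc 0)) h \<Longrightarrow> PR k f \<Longrightarrow> PR k g \<Longrightarrow> PR k (\<lambda>xs. h [f xs, g xs])"
  using PR_comp[of "Suc (Suc 0)" h "[f, g]" k] by simp

lemma PR_comp3: "PR (Suc (Suc (Suc 0))) h \<Longrightarrow> PR k f \<Longrightarrow> PR k g \<Longrightarrow> PR k u \<Longrightarrow> PR k (\<lambda>xs. h [f xs, g xs, u xs])"
  using PR_comp[of "Suc (Suc (Suc 0))" h "[f, g, u]" k] by simp

lemma PR_Suc: "PR k f \<Longrightarrow> PR k (\<lambda>xs. Suc (f xs))"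
proof -
  assume f: "PR k f"
  have "PR (Suc 0) (\<lambda>xs. Suc (hd xs))" using pr_succ by (simp add: primrec_PR)
  then have "PR k (\<lambda>xs. (\<lambda>xs. Suc (hd xs)) [f xs])" using f by (rule PR_comp1)
  then show ?thesis by simp
qed

lemma PR_const: "PR k (\<lambda>_. c)"
proof (induction c)
  case 0
  show ?case by (rule PR_zero)
next
  case (Suc c)
  from PR_Suc[OF Suc.IH] show ?case by simp
qed

lemma PR_add2: "PR (Suc (Suc 0)) (\<lambda>xs. xs ! 0 + xs ! 1)"
  by (rule PR_rec[where f="\<lambda>ys. ys ! 0" and g="\<lambda>zs. Suc (zs ! 1)"])
     (auto intro!: PR_proj PR_Suc simp: numeral_eq_Suc length_Suc_conv)

lemma PR_add: "PR k f \<Longrightarrow> PR k g \<Longrightarrow> PR k (\<lambda>xs. f xs + g xs)"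
  using PR_comp2[OF PR_add2] by simp

lemma PR_mult2: "PR (Suc (Suc 0)) (\<lambda>xs. xs ! 0 * xs ! 1)"
  by (rule PR_rec[where f="\<lambda>ys. 0" and g="\<lambda>zs. zs ! 2 + zs ! 1"])
     (auto intro!: PR_proj PR_add PR_zero simp: numeral_eq_Suc length_Suc_conv)

lemma PR_mult: "PR k f \<Longrightarrow> PR k g \<Longrightarrow> PR k (\<lambda>xs. f xs * g xs)"
  using PR_comp2[OF PR_mult2] by simp

lemma PR_pred1: "PR (Suc 0) (\<lambda>xs. xs ! 0 - 1)"
  by (rule PR_rec[where f="\<lambda>ys. 0" and g="\<lambda>zs. zs ! 0"])
     (auto intro!: PR_proj PR_zero)

lemma PR_sub2: "PR (Suc (Suc 0)) (\<lambda>xs. xs ! 1 - xs ! 0)"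
  by (rule PR_rec[where f="\<lambda>ys. ys ! 0" and g="\<lambda>zs. zs ! 1 - 1"])
     (auto intro!: PR_proj PR_comp1[OF PR_pred1, simplified] simp: numeral_eq_Suc length_Suc_conv)

lemma PR_sub: "PR k f \<Longrightarrow> PR k g \<Longrightarrow> PR k (\<lambda>xs. f xs - g xs)"
  using PR_comp2[OF PR_sub2, of k g f] by simp

lemma PR_cond3: "PR (Suc (Suc (Suc 0))) (\<lambda>xs. if xs ! 0 = 0 then xs ! 1 else xs ! 2)"
  by (rule PR_rec[where f="\<lambda>ys. ys ! 0" and g="\<lambda>zs. zs ! 3"])
     (auto intro!: PR_proj simp: numeral_eq_Suc length_Suc_conv)

lemma PR_if: "PR k c \<Longrightarrow> PR k f \<Longrightarrow> PR k g \<Longrightarrow> PR k (\<lambda>xs. if c xs = 0 then f xs else g xs)"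
  by (rule PR_cong[OF PR_comp3[OF PR_cond3, of k c f g]]) (simp_all add: numeral_2_eq_2)

lemma PR_pow2: "PR (Suc (Suc 0)) (\<lambda>xs. xs ! 1 ^ xs ! 0)"
  by (rule PR_rec[where f="\<lambda>ys. 1" and g="\<lambda>zs. zs ! 1 * zs ! 2"])
     (auto intro: PR_const PR_mult[OF PR_proj PR_proj] simp: numeral_eq_Suc length_Suc_conv)

lemma PR_pow: "PR k f \<Longrightarrow> PR k g \<Longrightarrow> PR k (\<lambda>xs. f xs ^ g xs)"
  using PR_comp2[OF PR_pow2, of k g f] by simp

lemma PR_tri: "PR (Suc 0) (\<lambda>xs. triangle (xs ! 0))"
proof (rule PR_rec[where f="\<lambda>ys. 0" and g="\<lambda>zs. zs ! 1 + Suc (zs ! 0)"])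
  show "PR 0 (\<lambda>ys. 0)" by (rule PR_zero)
  show "PR (Suc (Suc 0)) (\<lambda>zs. zs ! 1 + Suc (zs ! 0))"
    by (rule PR_add[OF PR_proj PR_Suc[OF PR_proj]]) simp_all
qed simp_all

lemma PR_pair: "PR k f \<Longrightarrow> PR k g \<Longrightarrow> PR k (\<lambda>xs. pair (f xs) (g xs))"
  unfolding pair_def prod_encode_def
  using PR_add[OF PR_comp1[OF PR_tri PR_add]] by simp

lemmas PR_intros = PR_proj PR_const PR_add PR_mult PR_sub PR_pow PR_pair PR_Suc PR_if


lemma map_nth_shift: "length zs = k + j \<Longrightarrow> map (\<lambda>i. zs ! (i + j)) [0..<k] = drop j zs"
  by (rule nth_equalityI) (auto simp: add.commute)

lemma map_nth_id: "length zs = k \<Longrightarrow> map (\<lambda>i. zs ! i) [0..<k] = zs"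
  using map_nth_shift[of zs k 0] by simp

lemma map_nth_tl: "length zs = Suc k \<Longrightarrow> map (\<lambda>i. zs ! Suc i) [0..<k] = tl zs"
  using map_nth_shift[of zs k 1] by (simp add: drop_Suc)

lemma PR_tl: "PR k f \<Longrightarrow> PR (Suc k) (\<lambda>zs. f (tl zs))"
proof -
  assume f: "PR k f"
  have "PR (Suc k) (\<lambda>zs. f (map (\<lambda>i. zs ! Suc i) [0..<k]))"
    by (rule PR_compL[OF f]) (auto intro: PR_proj)
  then show ?thesis by (rule PR_cong) (simp add: map_nth_tl)
qed

definition PRR :: "nat \<Rightarrow> (nat list \<Rightarrow> bool) \<Rightarrow> bool" where
  "PRR k P \<longleftrightarrow> PR k (\<lambda>xs. if P xs then 0 else 1)"

lemma PRR_cong: "PRR k P \<Longrightarrow> (\<And>xs. length xs = k \<Longrightarrow> P xs = Q xs) \<Longrightarrow> PRR k Q"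
  unfolding PRR_def by (erule PR_cong) simp

lemma PRR_subst:
  assumes "PRR m P" "\<And>i. i < m \<Longrightarrow> PR k (ts i)"
  shows "PRR k (\<lambda>xs. P (map (\<lambda>i. ts i xs) [0..<m]))"
  using PR_compL[OF assms[unfolded PRR_def]] unfolding PRR_def by simp

lemma diff_sym_zero: "((a::nat) - b + (b - a) = 0) = (a = b)" by arith

lemma PRR_eq: assumes f: "PR k f" and g: "PR k g" shows "PRR k (\<lambda>xs. f xs = g xs)"
  unfolding PRR_def
  by (rule PR_cong[OF PR_if[OF PR_add[OF PR_sub[OF f g] PR_sub[OF g f]] PR_const[of k 0] PR_const[of k 1]]]) (simp only: diff_sym_zero)

lemma PRR_less: assumes f: "PR k f" and g: "PR k g" shows "PRR k (\<lambda>xs. f xs < g xs)"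
  unfolding PRR_def
  by (rule PR_cong[OF PR_if[OF PR_sub[OF PR_Suc[OF f] g] PR_const[of k 0] PR_const[of k 1]]]) simp

lemma PRR_not: assumes P: "PRR k P" shows "PRR k (\<lambda>xs. \<not> P xs)"
  unfolding PRR_def
  by (rule PR_cong[OF PR_if[OF P[unfolded PRR_def] PR_const[of k 1] PR_const[of k 0]]]) simp

lemma PRR_conj: assumes P: "PRR k P" and Q: "PRR k Q" shows "PRR k (\<lambda>xs. P xs \<and> Q xs)"
  unfolding PRR_def
  by (rule PR_cong[OF PR_if[OF P[unfolded PRR_def] Q[unfolded PRR_def] PR_const[of k 1]]]) simp

lemma PRR_disj: assumes P: "PRR k P" and Q: "PRR k Q" shows "PRR k (\<lambda>xs. P xs \<or> Q xs)"
  unfolding PRR_def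
  by (rule PR_cong[OF PR_if[OF P[unfolded PRR_def] PR_const[of k 0] Q[unfolded PRR_def]]]) simp

lemma PRR_imp: "PRR k P \<Longrightarrow> PRR k Q \<Longrightarrow> PRR k (\<lambda>xs. P xs \<longrightarrow> Q xs)"
  using PRR_disj[OF PRR_not] by simp

lemma PRR_bex0:
  assumes R: "PRR (Suc k) R"
  shows "PRR (Suc k) (\<lambda>xs. \<exists>z<hd xs. R (z # tl xs))"
proof -
  have R2: "PR (Suc (Suc k)) (\<lambda>zs. if R (zs ! 0 # drop 2 zs) then 0 else 1)"
  proof -
    have "PR (Suc (Suc k)) (\<lambda>zs. (\<lambda>xs. if R xs then 0 else 1)
            (map (\<lambda>i. zs ! (if i = 0 then 0 else Suc i)) [0..<Suc k]))"
      by (rule PR_compL[OF R[unfolded PRR_def]]) (auto intro: PR_proj)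
    then show ?thesis
    proof (rule PR_cong)
      fix zs :: "nat list" assume "length zs = Suc (Suc k)"
      then have "map (\<lambda>i. zs ! (if i = 0 then 0 else Suc i)) [0..<Suc k] = zs ! 0 # drop 2 zs"
        by (simp only: map_upt_Suc) (simp add: map_nth_shift[symmetric])
      then show "(\<lambda>xs. if R xs then 0 else 1) (map (\<lambda>i. zs ! (if i = 0 then 0 else Suc i)) [0..<Suc k]) =
          (if R (zs ! 0 # drop 2 zs) then 0 else 1)" by simp
    qed
  qed
  have "PR (Suc k) (\<lambda>xs. if \<exists>z<hd xs. R (z # tl xs) then 0 else 1)"
  proof (rule PR_rec[where f="\<lambda>_. 1" and g="\<lambda>zs. if zs ! 1 = 0 then 0 else (if R (zs ! 0 # drop 2 zs) then 0 else 1)"])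
    show "PR k (\<lambda>_. 1)" by (rule PR_const)
    show "PR (Suc (Suc k)) (\<lambda>zs. if zs ! 1 = 0 then 0 else (if R (zs ! 0 # drop 2 zs) then 0 else 1))"
      by (rule PR_if[OF PR_proj PR_const R2]) simp
    show "\<And>ys. (if \<exists>z<hd (0 # ys). R (z # tl (0 # ys)) then 0 else 1) = 1" by simp
    show "\<And>n ys. (if \<exists>z<hd (Suc n # ys). R (z # tl (Suc n # ys)) then 0 else 1) =
      (if (n # (if \<exists>z<hd (n # ys). R (z # tl (n # ys)) then 0 else 1) # ys) ! 1 = 0 then 0
       else if R ((n # (if \<exists>z<hd (n # ys). R (z # tl (n # ys)) then 0 else 1) # ys) ! 0 #
                  drop 2 (n # (if \<exists>z<hd (n # ys). R (z # tl (n # ys)) then 0 else 1) # ys))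
            then 0 else 1)"
      by (auto simp: less_Suc_eq)
  qed
  then show ?thesis unfolding PRR_def .
qed

lemma PRR_bex:
  assumes R: "PRR (Suc m) R" and t: "PR k t" and ts: "\<And>i. i < m \<Longrightarrow> PR k (ts i)"
  shows "PRR k (\<lambda>xs. \<exists>z<t xs. R (z # map (\<lambda>i. ts i xs) [0..<m]))"
proof -
  have "PRR k (\<lambda>xs. (\<lambda>xs. \<exists>z<hd xs. R (z # tl xs)) (map (\<lambda>i. (\<lambda>i. if i = 0 then t else ts (i - 1)) i xs) [0..<Suc m]))"
    by (rule PRR_subst[OF PRR_bex0[OF R]]) (auto intro: t ts)
  then show ?thesis by (rule PRR_cong) (simp only: map_upt_Suc, simp)
qed

lemma PRR_ball:
  assumes R: "PRR (Suc m) R" and t: "PR k t" and ts: "\<And>i. i < m \<Longrightarrow> PR k (ts i)"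
  shows "PRR k (\<lambda>xs. \<forall>z<t xs. R (z # map (\<lambda>i. ts i xs) [0..<m]))"
  using PRR_not[OF PRR_bex[OF PRR_not[OF R] t ts]] by simp

definition CE :: "nat \<Rightarrow> (nat list \<Rightarrow> bool) \<Rightarrow> bool" where
  "CE k P \<longleftrightarrow> (\<exists>R. PRR (Suc k) R \<and> (\<forall>xs. length xs = k \<longrightarrow> (P xs \<longleftrightarrow> (\<exists>m. R (m # xs)))))"

lemma CE_cong: "CE k P \<Longrightarrow> (\<And>xs. length xs = k \<Longrightarrow> P xs = Q xs) \<Longrightarrow> CE k Q"
  unfolding CE_def by metis

lemma PRR_CE: assumes "PRR k P" shows "CE k P"
proof -
  have "PRR (Suc k) (\<lambda>zs. P (map (\<lambda>i. zs ! Suc i) [0..<k]))"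
    by (rule PRR_subst[OF assms]) (auto intro: PR_proj)
  then have "PRR (Suc k) (\<lambda>zs. P (tl zs))"
    by (rule PRR_cong) (simp add: map_nth_tl)
  then show ?thesis unfolding CE_def by (intro exI[of _ "\<lambda>zs. P (tl zs)"]) auto
qed

lemma CE_disj: assumes "CE k P" "CE k Q" shows "CE k (\<lambda>xs. P xs \<or> Q xs)"
proof -
  obtain R where R: "PRR (Suc k) R" "\<forall>xs. length xs = k \<longrightarrow> (P xs \<longleftrightarrow> (\<exists>m. R (m # xs)))"
    using assms(1) unfolding CE_def by blast
  obtain S where S: "PRR (Suc k) S" "\<forall>xs. length xs = k \<longrightarrow> (Q xs \<longleftrightarrow> (\<exists>m. S (m # xs)))"
    using assms(2) unfolding CE_def by blast
  show ?thesis unfolding CE_def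
    by (rule exI[of _ "\<lambda>zs. R zs \<or> S zs"]) (use R S PRR_disj[OF R(1) S(1)] in auto)
qed

lemma PR_Suc_hd: "PR (Suc k) (\<lambda>zs. Suc (zs ! 0))"
  by (rule PR_Suc[OF PR_proj]) simp

lemma CE_conj: assumes "CE k P" "CE k Q" shows "CE k (\<lambda>xs. P xs \<and> Q xs)"
proof -
  obtain R where R: "PRR (Suc k) R" "\<forall>xs. length xs = k \<longrightarrow> (P xs \<longleftrightarrow> (\<exists>m. R (m # xs)))"
    using assms(1) unfolding CE_def by blast
  obtain S where S: "PRR (Suc k) S" "\<forall>xs. length xs = k \<longrightarrow> (Q xs \<longleftrightarrow> (\<exists>m. S (m # xs)))"
    using assms(2) unfolding CE_def by blast
  have "PRR (Suc k) (\<lambda>zs. (\<exists>z<Suc (zs ! 0). R (z # map (\<lambda>i. zs ! Suc i) [0..<k])) \<and>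
                          (\<exists>z<Suc (zs ! 0). S (z # map (\<lambda>i. zs ! Suc i) [0..<k])))"
    by (intro PRR_conj PRR_bex R(1) S(1) PR_Suc_hd) (auto intro: PR_proj)
  then have PQ: "PRR (Suc k) (\<lambda>zs. (\<exists>z<Suc (hd zs). R (z # tl zs)) \<and> (\<exists>z<Suc (hd zs). S (z # tl zs)))"
    by (rule PRR_cong) (auto simp: map_nth_tl length_Suc_conv)
  have "P xs \<and> Q xs \<longleftrightarrow> (\<exists>m. (\<exists>z<Suc m. R (z # xs)) \<and> (\<exists>z<Suc m. S (z # xs)))"
    if l: "length xs = k" for xs
  proof
    assume "P xs \<and> Q xs"
    then obtain a b where ab: "R (a # xs)" "S (b # xs)" using R S l by blast
    have "(\<exists>z<Suc (max a b). R (z # xs)) \<and> (\<exists>z<Suc (max a b). S (z # xs))"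
    proof
      show "\<exists>z<Suc (max a b). R (z # xs)" using ab(1) by (intro exI[of _ a]) auto
      show "\<exists>z<Suc (max a b). S (z # xs)" using ab(2) by (intro exI[of _ b]) auto
    qed
    then show "\<exists>m. (\<exists>z<Suc m. R (z # xs)) \<and> (\<exists>z<Suc m. S (z # xs))" by blast
  next
    assume "\<exists>m. (\<exists>z<Suc m. R (z # xs)) \<and> (\<exists>z<Suc m. S (z # xs))"
    then show "P xs \<and> Q xs" using R S l by blast
  qed
  then show ?thesis unfolding CE_def using PQ by (intro exI[of _ "\<lambda>zs. (\<exists>z<Suc (hd zs). R (z # tl zs)) \<and> (\<exists>z<Suc (hd zs). S (z # tl zs))"]) auto
qed

lemma CE_ex: assumes "CE (Suc k) P" shows "CE k (\<lambda>xs. \<exists>y. P (y # xs))"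
proof -
  obtain R where R: "PRR (Suc (Suc k)) R" "\<forall>xs. length xs = Suc k \<longrightarrow> (P xs \<longleftrightarrow> (\<exists>m. R (m # xs)))"
    using assms unfolding CE_def by blast
  have Q: "PRR (Suc (Suc k)) (\<lambda>zs. \<exists>a<Suc (zs ! 1). R (a # map (\<lambda>i. zs ! (if i = 0 then 0 else Suc i)) [0..<Suc k]))"
    by (rule PRR_bex[OF R(1)]) (auto intro: PR_proj PR_Suc)
  have "PRR (Suc k) (\<lambda>zs. \<exists>y<Suc (zs ! 0). (\<lambda>zs. \<exists>a<Suc (zs ! 1). R (a # map (\<lambda>i. zs ! (if i = 0 then 0 else Suc i)) [0..<Suc k]))
          (y # map (\<lambda>i. zs ! i) [0..<Suc k]))"
    by (rule PRR_bex[OF Q]) (auto intro: PR_proj PR_Suc)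
  then have RR: "PRR (Suc k) (\<lambda>zs. \<exists>y<Suc (hd zs). \<exists>a<Suc (hd zs). R (a # y # tl zs))"
  proof (rule PRR_cong)
    fix zs :: "nat list" assume l: "length zs = Suc k"
    then obtain m xs where zs: "zs = m # xs" "length xs = k" by (auto simp: length_Suc_conv)
    have my: "map (\<lambda>i. (y # zs) ! (if i = 0 then 0 else Suc i)) [0..<Suc k] = y # xs" for y
      using zs by (simp only: map_upt_Suc) (simp add: map_nth_id)
    have mz: "map (\<lambda>i. zs ! i) [0..<Suc k] = zs" using l by (rule map_nth_id)
    show "(\<exists>y<Suc (zs ! 0). (\<lambda>zs. \<exists>a<Suc (zs ! 1). R (a # map (\<lambda>i. zs ! (if i = 0 then 0 else Suc i)) [0..<Suc k]))
          (y # map (\<lambda>i. zs ! i) [0..<Suc k])) = (\<exists>y<Suc (hd zs). \<exists>a<Suc (hd zs). R (a # y # tl zs))"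
      by (simp only: mz my) (simp add: zs)
  qed
  have "(\<exists>y. P (y # xs)) \<longleftrightarrow> (\<exists>m. \<exists>y<Suc m. \<exists>a<Suc m. R (a # y # xs))" if l: "length xs = k" for xs
  proof
    assume "\<exists>y. P (y # xs)"
    then obtain y a where ya: "R (a # y # xs)" using R l by auto
    have "\<exists>y'<Suc (max a y). \<exists>a'<Suc (max a y). R (a' # y' # xs)"
    proof (rule exI[of _ y], intro conjI)
      show "y < Suc (max a y)" by auto
      show "\<exists>a'<Suc (max a y). R (a' # y # xs)" using ya by (intro exI[of _ a]) auto
    qed
    then show "\<exists>m. \<exists>y<Suc m. \<exists>a<Suc m. R (a # y # xs)" by blast
  next
    assume "\<exists>m. \<exists>y<Suc m. \<exists>a<Suc m. R (a # y # xs)"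
    then show "\<exists>y. P (y # xs)" using R l by auto
  qed
  then show ?thesis unfolding CE_def using RR
    by (intro exI[of _ "\<lambda>zs. \<exists>y<Suc (hd zs). \<exists>a<Suc (hd zs). R (a # y # tl zs)"]) auto
qed

lemma finite_choice_bound:
  "(\<forall>y<(n::nat). \<exists>a::nat. Q y a) \<Longrightarrow> \<exists>M. \<forall>y<n. \<exists>a<M. Q y a"
proof (induction n)
  case 0 then show ?case by auto
next
  case (Suc n)
  then obtain M where M: "\<forall>y<n. \<exists>a<M. Q y a" by auto
  obtain b where b: "Q n b" using Suc.prems by auto
  show ?case
  proof (rule exI[of _ "max M (Suc b)"], intro allI impI)
    fix y assume y: "y < Suc n"
    show "\<exists>a<max M (Suc b). Q y a"
    proof (cases "y = n")
      case True then show ?thesis using b by (intro exI[of _ b]) auto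
    next
      case False then have "y < n" using y by simp
      then obtain a where "a < M" "Q y a" using M by blast
      then show ?thesis by (intro exI[of _ a]) auto
    qed
  qed
qed

lemma CE_ball: assumes "CE (Suc k) P" shows "CE (Suc k) (\<lambda>xs. \<forall>y<hd xs. P (y # tl xs))"
proof -
  obtain R where R: "PRR (Suc (Suc k)) R" "\<forall>xs. length xs = Suc k \<longrightarrow> (P xs \<longleftrightarrow> (\<exists>m. R (m # xs)))"
    using assms unfolding CE_def by blast
  have Q: "PRR (Suc (Suc (Suc k))) (\<lambda>zs. \<exists>a<zs ! 1. R (a # map (\<lambda>i. zs ! (if i = 0 then 0 else Suc (Suc i))) [0..<Suc k]))"
    by (rule PRR_bex[OF R(1)]) (auto intro: PR_proj)
  have "PRR (Suc (Suc k)) (\<lambda>zs. \<forall>y<zs ! 1. (\<lambda>zs. \<exists>a<zs ! 1. R (a # map (\<lambda>i. zs ! (if i = 0 then 0 else Suc (Suc i))) [0..<Suc k]))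
          (y # map (\<lambda>i. zs ! i) [0..<Suc (Suc k)]))"
    by (rule PRR_ball[OF Q]) (auto intro: PR_proj)
  then have RR: "PRR (Suc (Suc k)) (\<lambda>zs. \<forall>y<hd (tl zs). \<exists>a<hd zs. R (a # y # tl (tl zs)))"
  proof (rule PRR_cong)
    fix zs :: "nat list" assume l: "length zs = Suc (Suc k)"
    then obtain M n xs where zs: "zs = M # n # xs" "length xs = k" by (auto simp: length_Suc_conv)
    have my: "map (\<lambda>i. (y # zs) ! (if i = 0 then 0 else Suc (Suc i))) [0..<Suc k] = y # xs" for y
      using zs by (simp only: map_upt_Suc) (simp add: map_nth_id)
    have mz: "map (\<lambda>i. zs ! i) [0..<Suc (Suc k)] = zs" using l by (rule map_nth_id)
    show "(\<forall>y<zs ! 1. (\<lambda>zs. \<exists>a<zs ! 1. R (a # map (\<lambda>i. zs ! (if i = 0 then 0 else Suc (Suc i))) [0..<Suc k]))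
          (y # map (\<lambda>i. zs ! i) [0..<Suc (Suc k)])) = (\<forall>y<hd (tl zs). \<exists>a<hd zs. R (a # y # tl (tl zs)))"
      by (simp only: mz my) (simp add: zs)
  qed
  have EQ: "(\<forall>y<n. P (y # xs)) \<longleftrightarrow> (\<exists>M. \<forall>y<n. \<exists>a<M. R (a # y # xs))" if l: "length xs = k" for xs n
  proof
    assume "\<forall>y<n. P (y # xs)"
    then have "\<forall>y<n. \<exists>a. R (a # y # xs)" using R l by auto
    then show "\<exists>M. \<forall>y<n. \<exists>a<M. R (a # y # xs)" by (rule finite_choice_bound)
  next
    assume "\<exists>M. \<forall>y<n. \<exists>a<M. R (a # y # xs)"
    then show "\<forall>y<n. P (y # xs)" using R l by auto
  qed
  show ?thesis unfolding CE_def
  proof (intro exI[of _ "\<lambda>zs. \<forall>y<hd (tl zs). \<exists>a<hd zs. R (a # y # tl (tl zs))"] conjI allI impI)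
    show "PRR (Suc (Suc k)) (\<lambda>zs. \<forall>y<hd (tl zs). \<exists>a<hd zs. R (a # y # tl (tl zs)))" by (rule RR)
    fix xs :: "nat list" assume "length xs = Suc k"
    then obtain n ys where xs: "xs = n # ys" "length ys = k" by (auto simp: length_Suc_conv)
    show "(\<forall>y<hd xs. P (y # tl xs)) = (\<exists>m. (\<lambda>zs. \<forall>y<hd (tl zs). \<exists>a<hd zs. R (a # y # tl (tl zs))) (m # xs))"
      using EQ[OF xs(2), of n] xs(1) by simp
  qed
qed

lemma CE_subst:
  assumes P: "CE m P" and ts: "\<And>i. i < m \<Longrightarrow> PR k (ts i)"
  shows "CE k (\<lambda>xs. P (map (\<lambda>i. ts i xs) [0..<m]))"
proof -
  obtain R where R: "PRR (Suc m) R" "\<forall>xs. length xs = m \<longrightarrow> (P xs \<longleftrightarrow> (\<exists>a. R (a # xs)))"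
    using P unfolding CE_def by blast
  have "PRR (Suc k) (\<lambda>zs. R (map (\<lambda>i. (\<lambda>i. if i = 0 then (\<lambda>zs. zs ! 0) else (\<lambda>zs. ts (i - 1) (tl zs))) i zs) [0..<Suc m]))"
    apply (rule PRR_subst[OF R(1)])
    subgoal for i by (cases i) (auto intro!: PR_proj PR_tl ts)
    done
  then have RR: "PRR (Suc k) (\<lambda>zs. R (hd zs # map (\<lambda>i. ts i (tl zs)) [0..<m]))"
    by (rule PRR_cong) (simp only: map_upt_Suc, auto simp: length_Suc_conv)
  show ?thesis unfolding CE_def using R RR
    by (intro exI[of _ "\<lambda>zs. R (hd zs # map (\<lambda>i. ts i (tl zs)) [0..<m])"]) auto
qed

lemma ce_CE: assumes "ce S" shows "CE (Suc 0) (\<lambda>xs. xs ! 0 \<in> S)"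
proof -
  obtain f where f: "primrec_fn 2 f" "S = {n. \<exists>m. f [n, m] = 0}" using assms unfolding ce_def by blast
  have "PR (Suc (Suc 0)) f" using f(1) by (simp add: primrec_PR numeral_2_eq_2)
  then have "PR (Suc (Suc 0)) (\<lambda>zs. f [zs ! 1, zs ! 0])"
    by (rule PR_comp2[OF _ PR_proj PR_proj]) simp_all
  then have RR: "PRR (Suc (Suc 0)) (\<lambda>zs. f [zs ! 1, zs ! 0] = 0)"
    by (rule PRR_eq[OF _ PR_const])
  show ?thesis unfolding CE_def
  proof (intro exI[of _ "\<lambda>zs. f [zs ! 1, zs ! 0] = 0"] conjI allI impI)
    show "PRR (Suc (Suc 0)) (\<lambda>zs. f [zs ! 1, zs ! 0] = 0)" by (rule RR)
    fix xs :: "nat list" assume "length xs = Suc 0"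
    then obtain n where xs: "xs = [n]" by (auto simp: length_Suc_conv)
    show "(xs ! 0 \<in> S) = (\<exists>m. (\<lambda>zs. f [zs ! 1, zs ! 0] = 0) (m # xs))"
      using f(2) xs by simp
  qed
qed

lemma CE_ce: assumes "CE (Suc 0) (\<lambda>xs. xs ! 0 \<in> S)" shows "ce S"
proof -
  obtain R where R: "PRR (Suc (Suc 0)) R" "\<forall>xs. length xs = Suc 0 \<longrightarrow> (xs ! 0 \<in> S \<longleftrightarrow> (\<exists>m. R (m # xs)))"
    using assms unfolding CE_def by blast
  obtain g where g: "primrec_fn 2 g" "\<forall>xs. length xs = 2 \<longrightarrow> (if R xs then 0 else 1) = g xs"
    using R(1) unfolding PRR_def PR_def numeral_2_eq_2 by blast
  have "primrec_fn 2 (\<lambda>xs. g (map (\<lambda>h. h xs) [\<lambda>xs. xs ! 1, \<lambda>xs. xs ! 0]))"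
    by (rule pr_comp[OF g(1)]) (auto intro: pr_proj)
  then have P: "primrec_fn 2 (\<lambda>xs. g [xs ! 1, xs ! 0])" by simp
  have "S = {n. \<exists>m. g [[n, m] ! 1, [n, m] ! 0] = 0}"
  proof -
    have "n \<in> S \<longleftrightarrow> (\<exists>m. g [m, n] = 0)" for n
    proof -
      have "n \<in> S \<longleftrightarrow> (\<exists>m. R [m, n])" using R(2)[rule_format, of "[n]"] by simp
      also have "\<dots> \<longleftrightarrow> (\<exists>m. g [m, n] = 0)"
        using g(2) by (metis (no_types, lifting) length_Cons list.size(3) numeral_2_eq_2 one_neq_zero)
      finally show ?thesis .
    qed
    then show ?thesis by auto
  qed
  then show ?thesis unfolding ce_def using P by blast
qed


declare upt_Suc[simp del]

lemma fin_code_eq: "fin_code = set_encode"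
  by (simp add: fun_eq_iff fin_code_def set_encode_def)

lemma pair_eq_iff: "pair a b = pair c d \<longleftrightarrow> a = c \<and> b = d"
  by (simp add: pair_def)

lemma decode_less: "x \<in> set_decode d \<Longrightarrow> x < d"
proof -
  assume "x \<in> set_decode d"
  then have "odd (d div 2 ^ x)" by (simp add: set_decode_def)
  then have "d div 2 ^ x \<noteq> 0" by (cases "d div 2 ^ x") auto
  then have "2 ^ x \<le> d" by (simp add: div_eq_0_iff not_less)
  moreover have "x < 2 ^ x" by simp
  ultimately show ?thesis by linarith
qed

lemma PRR_bex_id: assumes R: "PRR (Suc k) R" and t: "PR k t" shows "PRR k (\<lambda>xs. \<exists>z<t xs. R (z # xs))"
proof -
  have "PRR k (\<lambda>xs. \<exists>z<t xs. R (z # map (\<lambda>i. xs ! i) [0..<k]))"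
    by (rule PRR_bex[OF R t]) (rule PR_proj)
  then show ?thesis by (rule PRR_cong) (simp add: map_nth_id)
qed

lemma mem_decode_iff: "x \<in> set_decode c \<longleftrightarrow> (\<exists>q<Suc c. \<exists>r<2^x. c = (2*q+1)*2^x + r)"
proof
  assume "x \<in> set_decode c"
  then have o: "odd (c div 2^x)" by (simp add: set_decode_def)
  define q where "q = c div 2^x div 2"
  have cq: "c div 2^x = 2*q+1" unfolding q_def using o by (simp add: odd_two_times_div_two_succ)
  have "c = (c div 2^x) * 2^x + c mod 2^x" by (rule div_mult_mod_eq[symmetric])
  then have "c = (2*q+1)*2^x + c mod 2^x" by (simp only: cq)
  moreover have "q < Suc c" unfolding q_def
    by (meson div_le_dividend le_imp_less_Suc order_trans)
  moreover have "c mod 2^x < 2^x" by simp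
  ultimately show "\<exists>q<Suc c. \<exists>r<2^x. c = (2*q+1)*2^x + r" by blast
next
  assume "\<exists>q<Suc c. \<exists>r<2^x. c = (2*q+1)*2^x + r"
  then obtain q r where qr: "r < 2^x" "c = (2*q+1)*2^x + r" by blast
  have "c div 2^x = 2*q+1"
    using qr by (simp add: div_add1_eq div_less)
  then show "x \<in> set_decode c" by (simp add: set_decode_def)
qed

lemma PRR_mem: assumes x: "PR k x" and c: "PR k c" shows "PRR k (\<lambda>xs. x xs \<in> set_decode (c xs))"
proof -
  have E0: "PRR (Suc (Suc k)) (\<lambda>zs. c (tl (tl zs)) = (2 * zs ! 1 + 1) * 2 ^ x (tl (tl zs)) + zs ! 0)"
    by (rule PRR_eq[OF PR_tl[OF PR_tl[OF c]] PR_add[OF PR_mult[OF PR_add[OF PR_mult[OF PR_const PR_proj] PR_const]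
          PR_pow[OF PR_const PR_tl[OF PR_tl[OF x]]]] PR_proj]]) simp_all
  have E1: "PRR (Suc k) (\<lambda>ys. \<exists>r < 2 ^ x (tl ys). c (tl ys) = (2 * ys ! 0 + 1) * 2 ^ x (tl ys) + r)"
    by (rule PRR_cong[OF PRR_bex_id[OF E0 PR_pow[OF PR_const PR_tl[OF x]]]]) simp
  have E2: "PRR k (\<lambda>xs. \<exists>q < Suc (c xs). \<exists>r < 2 ^ x xs. c xs = (2 * q + 1) * 2 ^ x xs + r)"
    by (rule PRR_cong[OF PRR_bex_id[OF E1 PR_Suc[OF c]]]) simp
  show ?thesis by (rule PRR_cong[OF E2]) (simp add: mem_decode_iff)
qed

lemma CE_mem: assumes G: "ce G" and t: "PR k t" shows "CE k (\<lambda>xs. t xs \<in> G)"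
proof -
  have "CE k (\<lambda>xs. (\<lambda>xs. xs ! 0 \<in> G) (map (\<lambda>i. (\<lambda>i. t) i xs) [0..<Suc 0]))"
    by (rule CE_subst[OF ce_CE[OF G]]) (rule t)
  then show ?thesis by (rule CE_cong) (simp add: upt_Suc)
qed

lemma map_dup: "length xs = Suc k \<Longrightarrow> map (\<lambda>i. xs ! (if i = 0 then 0 else i - 1)) [0..<Suc (Suc k)] = xs ! 0 # xs"
  by (simp only: map_upt_Suc) (auto simp: map_nth_id length_Suc_conv)

lemma CE_ball_keep: assumes P: "CE (Suc (Suc k)) P" shows "CE (Suc k) (\<lambda>xs. \<forall>y<xs ! 0. P (y # xs))"
proof -
  have "CE (Suc k) (\<lambda>xs. (\<lambda>xs. \<forall>y<hd xs. P (y # tl xs)) (map (\<lambda>i. (\<lambda>i xs. xs ! (if i = 0 then 0 else i - 1)) i xs) [0..<Suc (Suc k)]))"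
    by (rule CE_subst[OF CE_ball[OF P]]) (rule PR_proj, auto)
  then show ?thesis by (rule CE_cong) (simp only: map_dup, simp)
qed

lemma ce_e_le: "ce G \<Longrightarrow> A = enum_op G B \<Longrightarrow> A \<le>\<^sub>e B"
  unfolding e_le_def by blast

lemma enum_op_mono: "X \<subseteq> Y \<Longrightarrow> enum_op G X \<subseteq> enum_op G Y"
  unfolding enum_op_def by blast

lemma e_le_trans:
  assumes AB: "A \<le>\<^sub>e B" and BC: "B \<le>\<^sub>e C"
  shows "A \<le>\<^sub>e C"
proof -
  obtain G1 where G1: "ce G1" "A = enum_op G1 B" using AB unfolding e_le_def by blast
  obtain G2 where G2: "ce G2" "B = enum_op G2 C" using BC unfolding e_le_def by blast
  define D where "D = {z. \<exists>n e d. z = pair n e \<and> pair n d \<in> G1 \<and>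
      (\<forall>x<d. x \<in> set_decode d \<longrightarrow> (\<exists>c. pair x c \<in> G2 \<and> (\<forall>y<c. y \<in> set_decode c \<longrightarrow> y \<in> set_decode e)))}"
  \<comment> \<open>variables: y c x d e n z\<close>
  have T7: "CE (Suc (Suc (Suc (Suc (Suc (Suc (Suc 0))))))) (\<lambda>v. v ! 0 \<in> set_decode (v ! 1) \<longrightarrow> v ! 0 \<in> set_decode (v ! 4))"
    by (rule PRR_CE, rule PRR_imp; rule PRR_mem; rule PR_proj; simp)
  have T6: "CE (Suc (Suc (Suc (Suc (Suc (Suc 0)))))) (\<lambda>v. \<forall>y<v ! 0. y \<in> set_decode (v ! 0) \<longrightarrow> y \<in> set_decode (v ! 3))"
    by (rule CE_cong[OF CE_ball_keep[OF T7]]) simp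
  have T6b: "CE (Suc (Suc (Suc (Suc (Suc (Suc 0)))))) (\<lambda>v. pair (v ! 1) (v ! 0) \<in> G2 \<and> (\<forall>y<v ! 0. y \<in> set_decode (v ! 0) \<longrightarrow> y \<in> set_decode (v ! 3)))"
    by (rule CE_conj[OF CE_mem[OF G2(1) PR_pair[OF PR_proj[of 1] PR_proj[of 0]]] T6]) simp_all
  have T5: "CE (Suc (Suc (Suc (Suc (Suc 0))))) (\<lambda>v. \<exists>c. pair (v ! 0) c \<in> G2 \<and> (\<forall>y<c. y \<in> set_decode c \<longrightarrow> y \<in> set_decode (v ! 2)))"
    by (rule CE_cong[OF CE_ex[OF T6b]]) simp
  have T5b: "CE (Suc (Suc (Suc (Suc (Suc 0))))) (\<lambda>v. v ! 0 \<in> set_decode (v ! 1) \<longrightarrow> (\<exists>c. pair (v ! 0) c \<in> G2 \<and> (\<forall>y<c. y \<in> set_decode c \<longrightarrow> y \<in> set_decode (v ! 2))))"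
    by (rule CE_cong[OF CE_disj[OF PRR_CE[OF PRR_not[OF PRR_mem[OF PR_proj[of 0] PR_proj[of 1]]]] T5]]) simp_all
  have T4: "CE (Suc (Suc (Suc (Suc 0)))) (\<lambda>v. \<forall>x<v ! 0. x \<in> set_decode (v ! 0) \<longrightarrow> (\<exists>c. pair x c \<in> G2 \<and> (\<forall>y<c. y \<in> set_decode c \<longrightarrow> y \<in> set_decode (v ! 1))))"
    by (rule CE_cong[OF CE_ball_keep[OF T5b]]) simp
  have T4b: "CE (Suc (Suc (Suc (Suc 0)))) (\<lambda>v. v ! 3 = pair (v ! 2) (v ! 1) \<and> pair (v ! 2) (v ! 0) \<in> G1 \<and>
      (\<forall>x<v ! 0. x \<in> set_decode (v ! 0) \<longrightarrow> (\<exists>c. pair x c \<in> G2 \<and> (\<forall>y<c. y \<in> set_decode c \<longrightarrow> y \<in> set_decode (v ! 1)))))"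
    by (rule CE_conj[OF PRR_CE[OF PRR_eq[OF PR_proj[of 3] PR_pair[OF PR_proj[of 2] PR_proj[of 1]]]]
          CE_conj[OF CE_mem[OF G1(1) PR_pair[OF PR_proj[of 2] PR_proj[of 0]]] T4]]) simp_all
  have T3: "CE (Suc (Suc (Suc 0))) (\<lambda>v. \<exists>d. v ! 2 = pair (v ! 1) (v ! 0) \<and> pair (v ! 1) d \<in> G1 \<and>
      (\<forall>x<d. x \<in> set_decode d \<longrightarrow> (\<exists>c. pair x c \<in> G2 \<and> (\<forall>y<c. y \<in> set_decode c \<longrightarrow> y \<in> set_decode (v ! 0)))))"
    by (rule CE_cong[OF CE_ex[OF T4b]]) simp
  have T2: "CE (Suc (Suc 0)) (\<lambda>v. \<exists>e d. v ! 1 = pair (v ! 0) e \<and> pair (v ! 0) d \<in> G1 \<and>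
      (\<forall>x<d. x \<in> set_decode d \<longrightarrow> (\<exists>c. pair x c \<in> G2 \<and> (\<forall>y<c. y \<in> set_decode c \<longrightarrow> y \<in> set_decode e))))"
    by (rule CE_cong[OF CE_ex[OF T3]]) simp
  have T1: "CE (Suc 0) (\<lambda>v. v ! 0 \<in> D)"
    by (rule CE_cong[OF CE_ex[OF T2]]) (simp add: D_def)
  have ceD: "ce D" by (rule CE_ce[OF T1])
  have "enum_op D C = enum_op G1 (enum_op G2 C)"
  proof (intro set_eqI iffI)
    fix n assume "n \<in> enum_op D C"
    then obtain E where E: "finite E" "E \<subseteq> C" "pair n (fin_code E) \<in> D" unfolding enum_op_def by blast
    from E(3) obtain n' e d where d0: "pair n (fin_code E) = pair n' e" "pair n' d \<in> G1"
      "\<forall>x<d. x \<in> set_decode d \<longrightarrow> (\<exists>c. pair x c \<in> G2 \<and> (\<forall>y<c. y \<in> set_decode c \<longrightarrow> y \<in> set_decode e))"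
      unfolding D_def by blast
    have d: "pair n d \<in> G1"
      "\<forall>x<d. x \<in> set_decode d \<longrightarrow> (\<exists>c. pair x c \<in> G2 \<and> (\<forall>y<c. y \<in> set_decode c \<longrightarrow> y \<in> set_decode (fin_code E)))"
      using d0 unfolding pair_eq_iff by auto
    have sE: "set_decode (fin_code E) = E" using E(1) by (simp add: fin_code_eq)
    have "set_decode d \<subseteq> enum_op G2 C"
    proof
      fix x assume x: "x \<in> set_decode d"
      then obtain c where c: "pair x c \<in> G2" "\<forall>y<c. y \<in> set_decode c \<longrightarrow> y \<in> E"
        using d(2) decode_less[OF x] sE by auto
      have "set_decode c \<subseteq> E" using c(2) decode_less by blast
      then show "x \<in> enum_op G2 C" unfolding enum_op_def
        using c(1) E(2) by (intro CollectI exI[of _ "set_decode c"]) (auto simp: fin_code_eq)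
    qed
    then show "n \<in> enum_op G1 (enum_op G2 C)" unfolding enum_op_def
      using d(1) by (intro CollectI exI[of _ "set_decode d"]) (auto simp: fin_code_eq)
  next
    fix n assume "n \<in> enum_op G1 (enum_op G2 C)"
    then obtain Dd where Dd: "finite Dd" "Dd \<subseteq> enum_op G2 C" "pair n (fin_code Dd) \<in> G1"
      unfolding enum_op_def by blast
    have "\<forall>x\<in>Dd. \<exists>Ex. finite Ex \<and> Ex \<subseteq> C \<and> pair x (fin_code Ex) \<in> G2"
      using Dd(2) unfolding enum_op_def by blast
    then obtain Ef where Ef: "\<forall>x\<in>Dd. finite (Ef x) \<and> Ef x \<subseteq> C \<and> pair x (fin_code (Ef x)) \<in> G2"
      by (rule bchoice[elim_format]) blast
    define E where "E = \<Union> (Ef ` Dd)"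
    have E: "finite E" "E \<subseteq> C" unfolding E_def using Ef Dd(1) by auto
    have W: "\<forall>x<fin_code Dd. x \<in> set_decode (fin_code Dd) \<longrightarrow>
        (\<exists>c. pair x c \<in> G2 \<and> (\<forall>y<c. y \<in> set_decode c \<longrightarrow> y \<in> set_decode (fin_code E)))"
    proof (intro allI impI)
      fix x assume "x < fin_code Dd" "x \<in> set_decode (fin_code Dd)"
      then have x: "x \<in> Dd" using Dd(1) by (simp add: fin_code_eq)
      have "set_decode (fin_code (Ef x)) = Ef x" using Ef x by (simp add: fin_code_eq)
      moreover have "set_decode (fin_code E) = E" using E(1) by (simp add: fin_code_eq)
      moreover have "Ef x \<subseteq> E" using x unfolding E_def by blast
      ultimately show "\<exists>c. pair x c \<in> G2 \<and> (\<forall>y<c. y \<in> set_decode c \<longrightarrow> y \<in> set_decode (fin_code E))"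
        using Ef x by (intro exI[of _ "fin_code (Ef x)"]) auto
    qed
    then have "pair n (fin_code E) \<in> D" unfolding D_def using Dd(3) by blast
    then show "n \<in> enum_op D C" unfolding enum_op_def using E by blast
  qed
  then show ?thesis using G1(2) G2(2) ceD unfolding e_le_def by metis
qed


lemma PRR_ball_id: assumes R: "PRR (Suc k) R" and t: "PR k t" shows "PRR k (\<lambda>xs. \<forall>z<t xs. R (z # xs))"
proof -
  have "PRR k (\<lambda>xs. \<forall>z<t xs. R (z # map (\<lambda>i. xs ! i) [0..<k]))"
    by (rule PRR_ball[OF R t]) (rule PR_proj)
  then show ?thesis by (rule PRR_cong) (simp add: map_nth_id)
qed

lemma join_even: "2 * y \<in> Y \<oplus> Z \<longleftrightarrow> y \<in> Y"
  unfolding join_def by auto presburger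

lemma join_odd: "2 * y + 1 \<in> Y \<oplus> Z \<longleftrightarrow> y \<in> Z"
  unfolding join_def by auto presburger

lemma join_odd_Suc: "Suc (2 * y) \<in> Y \<oplus> Z \<longleftrightarrow> y \<in> Z"
  using join_odd[of y Y Z] by simp

lemma join_cases: "z \<in> Y \<oplus> Z \<Longrightarrow> (\<exists>y. z = 2 * y \<and> y \<in> Y) \<or> (\<exists>y. z = 2 * y + 1 \<and> y \<in> Z)"
  unfolding join_def by auto

lemma nat_even_odd: "(\<exists>y. z = 2 * y) \<or> (\<exists>y. z = 2 * y + (1::nat))"
  by presburger

lemma fin_code_single: "fin_code {p} = 2 ^ p"
  by (simp add: fin_code_def)

lemma fin_code_eq_single: "finite E \<Longrightarrow> fin_code E = 2 ^ p \<longleftrightarrow> E = {p}"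
  using set_encode_eq[of E "{p}"] by (auto simp: fin_code_eq fin_code_single[unfolded fin_code_eq])

lemma preimage_e_le:
  assumes F: "PR (Suc 0) (\<lambda>xs. f (xs ! 0))"
  shows "{n. f n \<in> S} \<le>\<^sub>e S"
proof -
  define D where "D = {z. \<exists>n. z = pair n (2 ^ f n)}"
  have F2: "PR (Suc (Suc 0)) (\<lambda>v. f (v ! 0))"
    by (rule PR_cong[OF PR_comp1[OF F PR_proj[of 0]]]) simp_all
  have T2: "CE (Suc (Suc 0)) (\<lambda>v. v ! 1 = pair (v ! 0) (2 ^ f (v ! 0)))"
    by (rule PRR_CE[OF PRR_eq[OF PR_proj PR_pair[OF PR_proj PR_pow[OF PR_const F2]]]]) simp_all
  have T1: "CE (Suc 0) (\<lambda>v. v ! 0 \<in> D)"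
    by (rule CE_cong[OF CE_ex[OF T2]]) (simp add: D_def)
  have "{n. f n \<in> S} = enum_op D S"
  proof (intro set_eqI iffI)
    fix n assume "n \<in> {n. f n \<in> S}"
    then show "n \<in> enum_op D S" unfolding enum_op_def D_def
      by (intro CollectI exI[of _ "{f n}"]) (auto simp: fin_code_single)
  next
    fix n assume "n \<in> enum_op D S"
    then obtain E where E: "finite E" "E \<subseteq> S" "pair n (fin_code E) \<in> D" unfolding enum_op_def by blast
    then obtain m where "pair n (fin_code E) = pair m (2 ^ f m)" unfolding D_def by blast
    then have "fin_code E = 2 ^ f n" unfolding pair_eq_iff by auto
    then have "E = {f n}" using E(1) fin_code_eq_single by blast
    then show "n \<in> {n. f n \<in> S}" using E(2) by auto
  qed
  then show ?thesis using CE_ce[OF T1] unfolding e_le_def by blast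
qed

lemma key:
  assumes W: "W \<le>\<^sub>e U"
    and KA: "\<And>a b. a \<in> A \<Longrightarrow> b \<in> B \<Longrightarrow> pair a b \<in> W"
    and KD: "\<And>a b. a \<notin> A \<Longrightarrow> b \<notin> B \<Longrightarrow> pair a b \<notin> W"
    and nB: "\<not> B \<le>\<^sub>e U"
    and X: "X = Y \<oplus> (UNIV - Y)" and XA: "X \<le>\<^sub>e A"
  shows "X \<le>\<^sub>e U"
proof -
  obtain G where G: "ce G" "X = enum_op G A" using XA unfolding e_le_def by blast
  define Ab where "Ab b = {a. pair a b \<in> W}" for b
  define B' where "B' = {b. \<exists>y. 2 * y \<in> enum_op G (Ab b) \<and> 2 * y + 1 \<in> enum_op G (Ab b)}"
  define D where "D = {z. \<exists>b e y d1 d2. z = pair b e \<and> pair (2 * y) d1 \<in> G \<and> pair (2 * y + 1) d2 \<in> G \<and>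
     (\<forall>x<d1. x \<in> set_decode d1 \<longrightarrow> pair x b \<in> set_decode e) \<and>
     (\<forall>x<d2. x \<in> set_decode d2 \<longrightarrow> pair x b \<in> set_decode e)}"
  \<comment> \<open>variables x d2 d1 y e b z\<close>
  have R1: "PRR (Suc (Suc (Suc (Suc (Suc (Suc (Suc 0))))))) (\<lambda>v. v ! 0 \<in> set_decode (v ! 2) \<longrightarrow> pair (v ! 0) (v ! 5) \<in> set_decode (v ! 4))"
    by (rule PRR_imp[OF PRR_mem[OF PR_proj PR_proj] PRR_mem[OF PR_pair[OF PR_proj PR_proj] PR_proj]]) simp_all
  have R2: "PRR (Suc (Suc (Suc (Suc (Suc (Suc (Suc 0))))))) (\<lambda>v. v ! 0 \<in> set_decode (v ! 1) \<longrightarrow> pair (v ! 0) (v ! 5) \<in> set_decode (v ! 4))"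
    by (rule PRR_imp[OF PRR_mem[OF PR_proj PR_proj] PRR_mem[OF PR_pair[OF PR_proj PR_proj] PR_proj]]) simp_all
  have Q1: "PRR (Suc (Suc (Suc (Suc (Suc (Suc 0)))))) (\<lambda>v. \<forall>x<v ! 1. x \<in> set_decode (v ! 1) \<longrightarrow> pair x (v ! 4) \<in> set_decode (v ! 3))"
    by (rule PRR_cong[OF PRR_ball_id[OF R1 PR_proj[of 1]]]) simp_all
  have Q2: "PRR (Suc (Suc (Suc (Suc (Suc (Suc 0)))))) (\<lambda>v. \<forall>x<v ! 0. x \<in> set_decode (v ! 0) \<longrightarrow> pair x (v ! 4) \<in> set_decode (v ! 3))"
    by (rule PRR_cong[OF PRR_ball_id[OF R2 PR_proj[of 0]]]) simp_all
  have P6: "CE (Suc (Suc (Suc (Suc (Suc (Suc 0)))))) (\<lambda>v. v ! 5 = pair (v ! 4) (v ! 3) \<and> pair (2 * v ! 2) (v ! 1) \<in> G \<and> pair (2 * v ! 2 + 1) (v ! 0) \<in> G \<and>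
     (\<forall>x<v ! 1. x \<in> set_decode (v ! 1) \<longrightarrow> pair x (v ! 4) \<in> set_decode (v ! 3)) \<and>
     (\<forall>x<v ! 0. x \<in> set_decode (v ! 0) \<longrightarrow> pair x (v ! 4) \<in> set_decode (v ! 3)))"
    by (rule CE_conj[OF PRR_CE[OF PRR_eq[OF PR_proj PR_pair[OF PR_proj PR_proj]]]
          CE_conj[OF CE_mem[OF G(1) PR_pair[OF PR_mult[OF PR_const PR_proj] PR_proj]]
          CE_conj[OF CE_mem[OF G(1) PR_pair[OF PR_add[OF PR_mult[OF PR_const PR_proj] PR_const] PR_proj]]
          CE_conj[OF PRR_CE[OF Q1] PRR_CE[OF Q2]]]]]) simp_all
  have P5: "CE (Suc (Suc (Suc (Suc (Suc 0))))) (\<lambda>v. \<exists>d2. v ! 4 = pair (v ! 3) (v ! 2) \<and> pair (2 * v ! 1) (v ! 0) \<in> G \<and> pair (2 * v ! 1 + 1) d2 \<in> G \<and>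
     (\<forall>x<v ! 0. x \<in> set_decode (v ! 0) \<longrightarrow> pair x (v ! 3) \<in> set_decode (v ! 2)) \<and>
     (\<forall>x<d2. x \<in> set_decode d2 \<longrightarrow> pair x (v ! 3) \<in> set_decode (v ! 2)))"
    by (rule CE_cong[OF CE_ex[OF P6]]) simp
  have P4: "CE (Suc (Suc (Suc (Suc 0)))) (\<lambda>v. \<exists>d1 d2. v ! 3 = pair (v ! 2) (v ! 1) \<and> pair (2 * v ! 0) d1 \<in> G \<and> pair (2 * v ! 0 + 1) d2 \<in> G \<and>
     (\<forall>x<d1. x \<in> set_decode d1 \<longrightarrow> pair x (v ! 2) \<in> set_decode (v ! 1)) \<and>
     (\<forall>x<d2. x \<in> set_decode d2 \<longrightarrow> pair x (v ! 2) \<in> set_decode (v ! 1)))"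
    by (rule CE_cong[OF CE_ex[OF P5]]) simp
  have P3: "CE (Suc (Suc (Suc 0))) (\<lambda>v. \<exists>y d1 d2. v ! 2 = pair (v ! 1) (v ! 0) \<and> pair (2 * y) d1 \<in> G \<and> pair (2 * y + 1) d2 \<in> G \<and>
     (\<forall>x<d1. x \<in> set_decode d1 \<longrightarrow> pair x (v ! 1) \<in> set_decode (v ! 0)) \<and>
     (\<forall>x<d2. x \<in> set_decode d2 \<longrightarrow> pair x (v ! 1) \<in> set_decode (v ! 0)))"
    by (rule CE_cong[OF CE_ex[OF P4]]) simp
  have P2: "CE (Suc (Suc 0)) (\<lambda>v. \<exists>e y d1 d2. v ! 1 = pair (v ! 0) e \<and> pair (2 * y) d1 \<in> G \<and> pair (2 * y + 1) d2 \<in> G \<and>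
     (\<forall>x<d1. x \<in> set_decode d1 \<longrightarrow> pair x (v ! 0) \<in> set_decode e) \<and>
     (\<forall>x<d2. x \<in> set_decode d2 \<longrightarrow> pair x (v ! 0) \<in> set_decode e))"
    by (rule CE_cong[OF CE_ex[OF P3]]) simp
  have P1: "CE (Suc 0) (\<lambda>v. v ! 0 \<in> D)"
    by (rule CE_cong[OF CE_ex[OF P2]]) (simp add: D_def)
  have "B' = enum_op D W"
  proof (intro set_eqI iffI)
    fix b assume "b \<in> B'"
    then obtain y where y: "2 * y \<in> enum_op G (Ab b)" "2 * y + 1 \<in> enum_op G (Ab b)" unfolding B'_def by blast
    obtain D1 where D1: "finite D1" "D1 \<subseteq> Ab b" "pair (2 * y) (fin_code D1) \<in> G" using y(1) unfolding enum_op_def by blast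
    obtain D2 where D2: "finite D2" "D2 \<subseteq> Ab b" "pair (2 * y + 1) (fin_code D2) \<in> G" using y(2) unfolding enum_op_def by blast
    define E where "E = (\<lambda>x. pair x b) ` (D1 \<union> D2)"
    have E: "finite E" "E \<subseteq> W" unfolding E_def using D1 D2 by (auto simp: Ab_def)
    have sE: "set_decode (fin_code E) = E" using E(1) by (simp add: fin_code_eq)
    have s1: "set_decode (fin_code D1) = D1" using D1(1) by (simp add: fin_code_eq)
    have s2: "set_decode (fin_code D2) = D2" using D2(1) by (simp add: fin_code_eq)
    have "pair b (fin_code E) = pair b (fin_code E) \<and> pair (2 * y) (fin_code D1) \<in> G \<and> pair (2 * y + 1) (fin_code D2) \<in> G \<and>
      (\<forall>x<fin_code D1. x \<in> set_decode (fin_code D1) \<longrightarrow> pair x b \<in> set_decode (fin_code E)) \<and>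
      (\<forall>x<fin_code D2. x \<in> set_decode (fin_code D2) \<longrightarrow> pair x b \<in> set_decode (fin_code E))"
      using D1(3) D2(3) by (simp only: sE s1 s2) (auto simp: E_def)
    then have "pair b (fin_code E) \<in> D" unfolding D_def by blast
    then show "b \<in> enum_op D W" unfolding enum_op_def using E by blast
  next
    fix b assume "b \<in> enum_op D W"
    then obtain E where E: "finite E" "E \<subseteq> W" "pair b (fin_code E) \<in> D" unfolding enum_op_def by blast
    from E(3) obtain b' e y d1 d2 where dd: "pair b (fin_code E) = pair b' e"
      "pair (2 * y) d1 \<in> G" "pair (2 * y + 1) d2 \<in> G"
      "\<forall>x<d1. x \<in> set_decode d1 \<longrightarrow> pair x b' \<in> set_decode e"
      "\<forall>x<d2. x \<in> set_decode d2 \<longrightarrow> pair x b' \<in> set_decode e"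
      unfolding D_def by blast
    have be: "b' = b" "e = fin_code E" using dd(1) unfolding pair_eq_iff by auto
    have sE: "set_decode (fin_code E) = E" using E(1) by (simp add: fin_code_eq)
    have "set_decode d1 \<subseteq> Ab b" using dd(4) be sE E(2) decode_less unfolding Ab_def by blast
    then have "2 * y \<in> enum_op G (Ab b)" unfolding enum_op_def
      using dd(2) by (intro CollectI exI[of _ "set_decode d1"]) (auto simp: fin_code_eq)
    moreover have "set_decode d2 \<subseteq> Ab b" using dd(5) be sE E(2) decode_less unfolding Ab_def by blast
    then have "2 * y + 1 \<in> enum_op G (Ab b)" unfolding enum_op_def
      using dd(3) by (intro CollectI exI[of _ "set_decode d2"]) (auto simp: fin_code_eq)
    ultimately show "b \<in> B'" unfolding B'_def by blast
  qed
  then have B'W: "B' \<le>\<^sub>e W" using CE_ce[OF P1] unfolding e_le_def by blast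
  have B'U: "B' \<le>\<^sub>e U" by (rule e_le_trans[OF B'W W])
  have sub: "B' \<subseteq> B"
  proof
    fix b assume bB': "b \<in> B'"
    show "b \<in> B"
    proof (rule ccontr)
      assume nb: "b \<notin> B"
      have "Ab b \<subseteq> A" using KD nb unfolding Ab_def by blast
      then have "enum_op G (Ab b) \<subseteq> X" using G(2) enum_op_mono by blast
      then obtain y where "2 * y \<in> X" "2 * y + 1 \<in> X" using bB' unfolding B'_def by blast
      then show False unfolding X by (simp add: join_even join_odd join_odd_Suc)
    qed
  qed
  have "B' \<noteq> B" using B'U nB by auto
  then obtain b1 where b1: "b1 \<in> B" "b1 \<notin> B'" using sub by blast
  have XS: "X \<subseteq> enum_op G (Ab b1)"
  proof -
    have "A \<subseteq> Ab b1" using KA b1(1) unfolding Ab_def by blast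
    then show ?thesis using G(2) enum_op_mono by blast
  qed
  have SX: "enum_op G (Ab b1) \<subseteq> X"
  proof
    fix z assume z: "z \<in> enum_op G (Ab b1)"
    from nat_even_odd[of z] show "z \<in> X"
    proof
      assume "\<exists>y. z = 2 * y"
      then obtain y where zy: "z = 2 * y" by blast
      show "z \<in> X"
      proof (rule ccontr)
        assume "z \<notin> X"
        then have "2 * y + 1 \<in> X" unfolding X zy by (simp add: join_even join_odd join_odd_Suc)
        then show False using XS z zy b1(2) unfolding B'_def by blast
      qed
    next
      assume "\<exists>y. z = 2 * y + 1"
      then obtain y where zy: "z = 2 * y + 1" by blast
      show "z \<in> X"
      proof (rule ccontr)
        assume "z \<notin> X"
        then have "2 * y \<in> X" unfolding X zy by (simp add: join_even join_odd join_odd_Suc)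
        then show False using XS z zy b1(2) unfolding B'_def by blast
      qed
    qed
  qed
  have XAb: "X \<le>\<^sub>e Ab b1" using G(1) XS SX unfolding e_le_def by blast
  have AbW: "Ab b1 \<le>\<^sub>e W"
  proof -
    have "{n. pair n b1 \<in> W} \<le>\<^sub>e W"
      by (rule preimage_e_le) (rule PR_pair[OF PR_proj PR_const], simp)
    then show ?thesis unfolding Ab_def .
  qed
  show ?thesis by (rule e_le_trans[OF e_le_trans[OF XAb AbW] W])
qed


lemma combine_W:
  assumes W0: "W0 \<le>\<^sub>e U" and W1: "W1 \<le>\<^sub>e U"
  shows "{z. \<exists>a b. (z = pair a (2 * b) \<and> pair a b \<in> W0) \<or> (z = pair a (2 * b + 1) \<and> pair a b \<in> W1)} \<le>\<^sub>e U"
proof -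
  obtain G0 where G0: "ce G0" "W0 = enum_op G0 U" using W0 unfolding e_le_def by blast
  obtain G1 where G1: "ce G1" "W1 = enum_op G1 U" using W1 unfolding e_le_def by blast
  define D where "D = {z. \<exists>a b e. (z = pair (pair a (2 * b)) e \<and> pair (pair a b) e \<in> G0) \<or>
     (z = pair (pair a (2 * b + 1)) e \<and> pair (pair a b) e \<in> G1)}"
  have P4: "CE (Suc (Suc (Suc (Suc 0)))) (\<lambda>v. (v ! 3 = pair (pair (v ! 2) (2 * v ! 1)) (v ! 0) \<and> pair (pair (v ! 2) (v ! 1)) (v ! 0) \<in> G0) \<or>
     (v ! 3 = pair (pair (v ! 2) (2 * v ! 1 + 1)) (v ! 0) \<and> pair (pair (v ! 2) (v ! 1)) (v ! 0) \<in> G1))"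
    by (rule CE_disj[OF CE_conj[OF PRR_CE[OF PRR_eq[OF PR_proj PR_pair[OF PR_pair[OF PR_proj PR_mult[OF PR_const PR_proj]] PR_proj]]]
          CE_mem[OF G0(1) PR_pair[OF PR_pair[OF PR_proj PR_proj] PR_proj]]]
        CE_conj[OF PRR_CE[OF PRR_eq[OF PR_proj PR_pair[OF PR_pair[OF PR_proj PR_add[OF PR_mult[OF PR_const PR_proj] PR_const]] PR_proj]]]
          CE_mem[OF G1(1) PR_pair[OF PR_pair[OF PR_proj PR_proj] PR_proj]]]]) simp_all
  have P3: "CE (Suc (Suc (Suc 0))) (\<lambda>v. \<exists>e. (v ! 2 = pair (pair (v ! 1) (2 * v ! 0)) e \<and> pair (pair (v ! 1) (v ! 0)) e \<in> G0) \<or>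
     (v ! 2 = pair (pair (v ! 1) (2 * v ! 0 + 1)) e \<and> pair (pair (v ! 1) (v ! 0)) e \<in> G1))"
    by (rule CE_cong[OF CE_ex[OF P4]]) simp
  have P2: "CE (Suc (Suc 0)) (\<lambda>v. \<exists>b e. (v ! 1 = pair (pair (v ! 0) (2 * b)) e \<and> pair (pair (v ! 0) b) e \<in> G0) \<or>
     (v ! 1 = pair (pair (v ! 0) (2 * b + 1)) e \<and> pair (pair (v ! 0) b) e \<in> G1))"
    by (rule CE_cong[OF CE_ex[OF P3]]) simp
  have P1: "CE (Suc 0) (\<lambda>v. v ! 0 \<in> D)"
    by (rule CE_cong[OF CE_ex[OF P2]]) (simp add: D_def)
  have "{z. \<exists>a b. (z = pair a (2 * b) \<and> pair a b \<in> W0) \<or> (z = pair a (2 * b + 1) \<and> pair a b \<in> W1)} = enum_op D U"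
  proof (intro set_eqI iffI)
    fix z assume "z \<in> {z. \<exists>a b. (z = pair a (2 * b) \<and> pair a b \<in> W0) \<or> (z = pair a (2 * b + 1) \<and> pair a b \<in> W1)}"
    then obtain a b where ab: "(z = pair a (2 * b) \<and> pair a b \<in> W0) \<or> (z = pair a (2 * b + 1) \<and> pair a b \<in> W1)" by blast
    then show "z \<in> enum_op D U"
    proof
      assume h: "z = pair a (2 * b) \<and> pair a b \<in> W0"
      then obtain E where E: "finite E" "E \<subseteq> U" "pair (pair a b) (fin_code E) \<in> G0"
        using G0(2) unfolding enum_op_def by blast
      then have "pair z (fin_code E) \<in> D" using h unfolding D_def by blast
      then show ?thesis using E unfolding enum_op_def by blast
    next
      assume h: "z = pair a (2 * b + 1) \<and> pair a b \<in> W1"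
      then obtain E where E: "finite E" "E \<subseteq> U" "pair (pair a b) (fin_code E) \<in> G1"
        using G1(2) unfolding enum_op_def by blast
      then have "pair z (fin_code E) \<in> D" using h unfolding D_def by blast
      then show ?thesis using E unfolding enum_op_def by blast
    qed
  next
    fix z assume "z \<in> enum_op D U"
    then obtain E where E: "finite E" "E \<subseteq> U" "pair z (fin_code E) \<in> D" unfolding enum_op_def by blast
    then obtain a b e where abe: "(pair z (fin_code E) = pair (pair a (2 * b)) e \<and> pair (pair a b) e \<in> G0) \<or>
     (pair z (fin_code E) = pair (pair a (2 * b + 1)) e \<and> pair (pair a b) e \<in> G1)" unfolding D_def by blast
    then show "z \<in> {z. \<exists>a b. (z = pair a (2 * b) \<and> pair a b \<in> W0) \<or> (z = pair a (2 * b + 1) \<and> pair a b \<in> W1)}"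
    proof
      assume h: "pair z (fin_code E) = pair (pair a (2 * b)) e \<and> pair (pair a b) e \<in> G0"
      then have "z = pair a (2 * b)" "pair (pair a b) (fin_code E) \<in> G0" unfolding pair_eq_iff by auto
      moreover have "pair a b \<in> W0" using calculation(2) E G0(2) unfolding enum_op_def by blast
      ultimately show ?thesis by blast
    next
      assume h: "pair z (fin_code E) = pair (pair a (2 * b + 1)) e \<and> pair (pair a b) e \<in> G1"
      then have "z = pair a (2 * b + 1)" "pair (pair a b) (fin_code E) \<in> G1" unfolding pair_eq_iff by auto
      moreover have "pair a b \<in> W1" using calculation(2) E G1(2) unfolding enum_op_def by blast
      ultimately show ?thesis by blast
    qed
  qed
  then show ?thesis using CE_ce[OF P1] unfolding e_le_def by blast
qed

lemma K_pair_rules: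
  assumes "K_pair U A B"
  shows "\<exists>W. W \<le>\<^sub>e U \<and> (\<forall>a b. a \<in> A \<and> b \<in> B \<longrightarrow> pair a b \<in> W) \<and> (\<forall>a b. a \<notin> A \<and> b \<notin> B \<longrightarrow> pair a b \<notin> W)"
proof -
  obtain W where W: "W \<le>\<^sub>e U" "{pair a b | a b. a \<in> A \<and> b \<in> B} \<subseteq> W"
      "{pair a b | a b. a \<notin> A \<and> b \<notin> B} \<inter> W = {}"
    using assms unfolding K_pair_def by (elim exE conjE) (rule that)
  have "pair a b \<in> W" if "a \<in> A" "b \<in> B" for a b
  proof -
    have "pair a b \<in> {pair a b | a b. a \<in> A \<and> b \<in> B}" using that by blast
    then show ?thesis by (rule subsetD[OF W(2)])
  qed
  moreover have "pair a b \<notin> W" if "a \<notin> A" "b \<notin> B" for a b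
  proof -
    have "pair a b \<in> {pair a b | a b. a \<notin> A \<and> b \<notin> B}" using that by blast
    then show ?thesis using W(3) by (auto simp del: mem_Collect_eq)
  qed
  ultimately show ?thesis using W(1) by blast
qed

theorem lemma6p3:
  fixes T0 T1 A B C :: "nat set"
  assumes "total_degree T0" and "total_degree T1"
    and "T0 <\<^sub>e A" and "T1 <\<^sub>e A"
    and "nontrivial_K_pair T0 A B" and "nontrivial_K_pair T1 A C"
  shows "T0 \<equiv>\<^sub>e T1 \<and> nontrivial_K_pair T0 A (B \<oplus> C)"
proof -
  obtain Y0 where Y0: "T0 \<equiv>\<^sub>e Y0 \<oplus> (UNIV - Y0)" using assms(1) unfolding total_degree_def by blast
  obtain Y1 where Y1: "T1 \<equiv>\<^sub>e Y1 \<oplus> (UNIV - Y1)" using assms(2) unfolding total_degree_def by blast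
  have T0A: "T0 \<le>\<^sub>e A" and T1A: "T1 \<le>\<^sub>e A" using assms(3,4) unfolding e_less_def by auto
  have K0: "K_pair T0 A B" and nA0: "\<not> A \<le>\<^sub>e T0" and nB: "\<not> B \<le>\<^sub>e T0"
    using assms(5) unfolding nontrivial_K_pair_def by auto
  have K1: "K_pair T1 A C" and nC: "\<not> C \<le>\<^sub>e T1"
    using assms(6) unfolding nontrivial_K_pair_def by auto
  obtain W0 where W0': "W0 \<le>\<^sub>e T0" "\<forall>a b. a \<in> A \<and> b \<in> B \<longrightarrow> pair a b \<in> W0"
    "\<forall>a b. a \<notin> A \<and> b \<notin> B \<longrightarrow> pair a b \<notin> W0" using K_pair_rules[OF K0] by blast
  have W0: "W0 \<le>\<^sub>e T0" "\<And>a b. a \<in> A \<Longrightarrow> b \<in> B \<Longrightarrow> pair a b \<in> W0"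
    "\<And>a b. a \<notin> A \<Longrightarrow> b \<notin> B \<Longrightarrow> pair a b \<notin> W0" using W0' by blast+
  obtain W1 where W1': "W1 \<le>\<^sub>e T1" "\<forall>a b. a \<in> A \<and> b \<in> C \<longrightarrow> pair a b \<in> W1"
    "\<forall>a b. a \<notin> A \<and> b \<notin> C \<longrightarrow> pair a b \<notin> W1" using K_pair_rules[OF K1] by blast
  have W1: "W1 \<le>\<^sub>e T1" "\<And>a b. a \<in> A \<Longrightarrow> b \<in> C \<Longrightarrow> pair a b \<in> W1"
    "\<And>a b. a \<notin> A \<Longrightarrow> b \<notin> C \<Longrightarrow> pair a b \<notin> W1" using W1' by blast+
  have X0T: "Y0 \<oplus> (UNIV - Y0) \<le>\<^sub>e T0" "T0 \<le>\<^sub>e Y0 \<oplus> (UNIV - Y0)" using Y0 unfolding e_equiv_def by auto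
  have X1T: "Y1 \<oplus> (UNIV - Y1) \<le>\<^sub>e T1" "T1 \<le>\<^sub>e Y1 \<oplus> (UNIV - Y1)" using Y1 unfolding e_equiv_def by auto
  have "Y1 \<oplus> (UNIV - Y1) \<le>\<^sub>e T0"
    by (rule key[OF W0(1) W0(2) W0(3) nB refl e_le_trans[OF X1T(1) T1A]])
  then have T10: "T1 \<le>\<^sub>e T0" by (rule e_le_trans[OF X1T(2)])
  have "Y0 \<oplus> (UNIV - Y0) \<le>\<^sub>e T1"
    by (rule key[OF W1(1) W1(2) W1(3) nC refl e_le_trans[OF X0T(1) T0A]])
  then have T01: "T0 \<le>\<^sub>e T1" by (rule e_le_trans[OF X0T(2)])
  have eq: "T0 \<equiv>\<^sub>e T1" unfolding e_equiv_def using T01 T10 by blast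
  define W where "W = {z. \<exists>a b. (z = pair a (2 * b) \<and> pair a b \<in> W0) \<or> (z = pair a (2 * b + 1) \<and> pair a b \<in> W1)}"
  have WT0: "W \<le>\<^sub>e T0" unfolding W_def by (rule combine_W[OF W0(1) e_le_trans[OF W1(1) T10]])
  have K: "K_pair T0 A (B \<oplus> C)" unfolding K_pair_def
  proof (intro exI[of _ W] conjI)
    show "W \<le>\<^sub>e T0" by (rule WT0)
    show "{pair a b |a b. a \<in> A \<and> b \<in> B \<oplus> C} \<subseteq> W"
    proof
      fix z assume "z \<in> {pair a b |a b. a \<in> A \<and> b \<in> B \<oplus> C}"
      then obtain a x where ax: "z = pair a x" "a \<in> A" "x \<in> B \<oplus> C" by blast
      from join_cases[OF ax(3)] show "z \<in> W"
      proof
        assume "\<exists>y. x = 2 * y \<and> y \<in> B"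
        then obtain y where "x = 2 * y" "y \<in> B" by blast
        then show "z \<in> W" unfolding W_def using ax W0(2) by blast
      next
        assume "\<exists>y. x = 2 * y + 1 \<and> y \<in> C"
        then obtain y where "x = 2 * y + 1" "y \<in> C" by blast
        then show "z \<in> W" unfolding W_def using ax W1(2) by blast
      qed
    qed
    show "{pair a b |a b. a \<notin> A \<and> b \<notin> B \<oplus> C} \<inter> W = {}"
    proof (rule ccontr)
      assume "{pair a b |a b. a \<notin> A \<and> b \<notin> B \<oplus> C} \<inter> W \<noteq> {}"
      then obtain a x where ax: "a \<notin> A" "x \<notin> B \<oplus> C" "pair a x \<in> W" by blast
      then obtain a' b where "(pair a x = pair a' (2 * b) \<and> pair a' b \<in> W0) \<or> (pair a x = pair a' (2 * b + 1) \<and> pair a' b \<in> W1)"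
        unfolding W_def by blast
      then show False
      proof
        assume h: "pair a x = pair a' (2 * b) \<and> pair a' b \<in> W0"
        then have "a' = a" "x = 2 * b" unfolding pair_eq_iff by auto
        then have "b \<notin> B" using ax(2) join_even by metis
        then show False using h W0(3) ax(1) \<open>a' = a\<close> by blast
      next
        assume h: "pair a x = pair a' (2 * b + 1) \<and> pair a' b \<in> W1"
        then have "a' = a" "x = 2 * b + 1" unfolding pair_eq_iff by auto
        then have "b \<notin> C" using ax(2) join_odd by metis
        then show False using h W1(3) ax(1) \<open>a' = a\<close> by blast
      qed
    qed
  qed
  have BBC: "B \<le>\<^sub>e B \<oplus> C"
  proof -
    have "{n. 2 * n \<in> B \<oplus> C} \<le>\<^sub>e B \<oplus> C"
      by (rule preimage_e_le) (rule PR_mult[OF PR_const PR_proj], simp)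
    then show ?thesis by (simp add: join_even)
  qed
  have "\<not> B \<oplus> C \<le>\<^sub>e T0" using nB e_le_trans[OF BBC] by blast
  then have "nontrivial_K_pair T0 A (B \<oplus> C)" unfolding nontrivial_K_pair_def using K nA0 by blast
  then show ?thesis using eq by blast
qed

end
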